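(* Let $n\geq 2$, $1\leq k\leq n-1$, and $q=p^h$ with $p>5$ prime and $h\geq 1$. Let $B$ be a minimal $k$-blocking set in $\mathrm{PG}(n,q)$ such that every $(n-k)$-dimensional subspace of $\mathrm{PG}(n,q)$ meets $B$ in $1 \pmod p$ points. If $\theta_k<|B|<2q^k$, then \[ |B| < \frac{3(q^k-q^k/p)}{2}. \]
   Context: $\mathrm{PG}(n,q)$ is the $n$-dimensional projective space over $\mathbb{F}_q$, and $\theta_m=(q^{m+1}-1)/(q-1)$ is the number of points of $\mathrm{PG}(m,q)$. A $k$-blocking set of $\mathrm{PG}(n,q)$ is a set $K$ of points such that every $(n-k)$-dimensional subspace meets $K$. A point $P\in K$ is essential if some $(n-k)$-dimensional subspace meets $K$ exactly in $P$; $K$ is minimal if every point of $K$ is essential (equivalently, no proper subset of $K$ is a $k$-blocking set). *)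

theory Defs
  imports "HOL-Analysis.Analysis"
begin

text \<open>The projective space PG(n,q) is modelled as the lattice of linear subspaces
  of the vector space 'a^'n over a finite field 'a, where CARD('n) = n+1.
  A projective subspace of (projective) dimension d is a linear subspace of
  vector-space dimension d+1; points are the 1-dimensional linear subspaces.\<close>

definition proj_subspace :: "nat \<Rightarrow> ('a::field ^ 'n::finite) set \<Rightarrow> bool" where
  "proj_subspace d U \<longleftrightarrow> vec.subspace U \<and> vec.dim U = d + 1"

definition proj_points :: "('a::field ^ 'n::finite) set set" where
  "proj_points = {P. proj_subspace 0 P}"

definition meet :: "('a::field ^ 'n::finite) set set \<Rightarrow> ('a ^ 'n) set \<Rightarrow> ('a ^ 'n) set set" where
  "meet K U = {P \<in> K. P \<subseteq> U}"

definition blocking_set :: "nat \<Rightarrow> nat \<Rightarrow> ('a::field ^ 'n::finite) set set \<Rightarrow> bool" where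
  "blocking_set n k K \<longleftrightarrow> K \<subseteq> proj_points \<and>
     (\<forall>U. proj_subspace (n - k) U \<longrightarrow> meet K U \<noteq> {})"

definition essential_point :: "nat \<Rightarrow> nat \<Rightarrow> ('a::field ^ 'n::finite) set set \<Rightarrow> ('a ^ 'n) set \<Rightarrow> bool" where
  "essential_point n k K P \<longleftrightarrow> (\<exists>U. proj_subspace (n - k) U \<and> meet K U = {P})"

definition minimal_blocking_set :: "nat \<Rightarrow> nat \<Rightarrow> ('a::field ^ 'n::finite) set set \<Rightarrow> bool" where
  "minimal_blocking_set n k K \<longleftrightarrow> blocking_set n k K \<and> (\<forall>P\<in>K. essential_point n k K P)"

definition theta :: "nat \<Rightarrow> nat \<Rightarrow> nat" where
  "theta q m = (q ^ (m + 1) - 1) div (q - 1)"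

end

theory Submission
  imports Defs
begin

lemma card_span_indep:
  fixes S :: "('a::{field,finite} ^ 'n::finite) set"
  assumes "finite S" "vec.independent S"
  shows "card (vec.span S) = CARD('a) ^ card S"
  using assms
proof (induction S rule: finite_induct)
  case empty
  then show ?case by simp
next
  case (insert v F)
  have vF: "v \<notin> vec.span F" and iF: "vec.independent F"
    using insert.prems insert.hyps by (auto simp: vec.independent_insert)
  have bij: "bij_betw (\<lambda>(c,w). c *s v + w) ((UNIV::'a set) \<times> vec.span F) (vec.span (insert v F))"
  proof (rule bij_betwI')
    fix x y assume x: "x \<in> (UNIV::'a set) \<times> vec.span F" and y: "y \<in> (UNIV::'a set) \<times> vec.span F"
    obtain c w where [simp]: "x = (c,w)" by (cases x)
    obtain d u where [simp]: "y = (d,u)" by (cases y)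
    show "((\<lambda>(c,w). c *s v + w) x = (\<lambda>(c,w). c *s v + w) y) = (x = y)"
    proof
      assume eq: "(\<lambda>(c,w). c *s v + w) x = (\<lambda>(c,w). c *s v + w) y"
      hence e: "(c - d) *s v = u - w" by (simp add: algebra_simps vector_sadd_rdistrib vector_ssub_ldistrib)
      have "c = d"
      proof (rule ccontr)
        assume "c \<noteq> d"
        hence "v = inverse (c - d) *s (u - w)" using e by (metis vec.scale_scale left_inverse right_minus_eq vec.scale_one)
        moreover have "u - w \<in> vec.span F" using x y by (simp add: vec.span_diff)
        ultimately show False using vF vec.span_scale by metis
      qed
      thus "x = y" using e by simp
    qed simp
  next
    fix x assume "x \<in> (UNIV::'a set) \<times> vec.span F"
    then show "(\<lambda>(c,w). c *s v + w) x \<in> vec.span (insert v F)"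
    proof (clarify)
      fix c w assume "w \<in> vec.span F"
      hence "w \<in> vec.span (insert v F)" using vec.span_mono[of F "insert v F"] by blast
      moreover have "c *s v \<in> vec.span (insert v F)" by (simp add: vec.span_base vec.span_scale)
      ultimately show "c *s v + w \<in> vec.span (insert v F)" by (simp add: vec.span_add)
    qed
  next
    fix y assume "y \<in> vec.span (insert v F)"
    then obtain k where "y - k *s v \<in> vec.span F" using vec.span_breakdown_eq by blast
    then show "\<exists>x\<in>(UNIV::'a set) \<times> vec.span F. y = (\<lambda>(c,w). c *s v + w) x"
      by (intro bexI[of _ "(k, y - k *s v)"]) auto
  qed
  have "card (vec.span (insert v F)) = card ((UNIV::'a set) \<times> vec.span F)"
    using bij_betw_same_card[OF bij] by simp
  also have "\<dots> = CARD('a) * CARD('a) ^ card F" using insert.IH[OF iF] by (simp add: card_cartesian_product)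
  finally show ?case using insert.hyps by simp
qed

lemma card_subspace:
  fixes U :: "('a::{field,finite} ^ 'n::finite) set"
  assumes "vec.subspace U"
  shows "card U = CARD('a) ^ vec.dim U"
proof -
  obtain B where B: "B \<subseteq> U" "vec.independent B" "U \<subseteq> vec.span B" "card B = vec.dim U"
    using vec.basis_exists by blast
  have "vec.span B = U" using vec.span_subspace[OF B(1) B(3) assms] .
  thus ?thesis using card_span_indep[of B] B vec.finiteI_independent by metis
qed

lemma point_iff:
  fixes P :: "('a::field ^ 'n::finite) set"
  shows "proj_subspace 0 P \<longleftrightarrow> (\<exists>v. v \<noteq> 0 \<and> P = vec.span {v})"
proof
  assume "proj_subspace 0 P"
  hence s: "vec.subspace P" and d: "vec.dim P = 1" unfolding proj_subspace_def by auto
  obtain B where B: "B \<subseteq> P" "vec.independent B" "P \<subseteq> vec.span B" "card B = vec.dim P"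
    using vec.basis_exists by blast
  then obtain v where "B = {v}" using d card_1_singletonE by metis
  moreover have "v \<noteq> 0" using B(2) \<open>B = {v}\<close> vec.dependent_zero by blast
  moreover have "vec.span B = P" using vec.span_subspace[OF B(1) B(3) s] .
  ultimately show "\<exists>v. v \<noteq> 0 \<and> P = vec.span {v}" by blast
next
  assume "\<exists>v. v \<noteq> 0 \<and> P = vec.span {v}"
  then obtain v where "v \<noteq> 0" "P = vec.span {v}" by blast
  thus "proj_subspace 0 P" unfolding proj_subspace_def by (simp add: vec.subspace_span)
qed

lemma point_eq_span:
  fixes P :: "('a::field ^ 'n::finite) set"
  assumes "proj_subspace 0 P" "v \<in> P" "v \<noteq> 0"
  shows "P = vec.span {v}"
proof -
  have s: "vec.subspace P" and d: "vec.dim P = 1" using assms(1) unfolding proj_subspace_def by auto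
  have "vec.span {v} \<subseteq> P" using assms(2) s by (simp add: vec.span_minimal)
  moreover have "vec.dim (vec.span {v}) = vec.dim P" using d assms(3) by simp
  ultimately show ?thesis using vec.subspace_dim_equal[OF vec.subspace_span s, of "{v}"] by simp
qed

lemma card_point:
  fixes P :: "('a::{field,finite} ^ 'n::finite) set"
  assumes "proj_subspace 0 P"
  shows "card P = CARD('a)"
  using assms card_subspace unfolding proj_subspace_def by fastforce

lemma point_zero: "proj_subspace 0 P \<Longrightarrow> 0 \<in> P"
  unfolding proj_subspace_def using vec.subspace_0 by blast

lemma count_points:
  fixes U :: "('a::{field,finite} ^ 'n::finite) set"
  assumes "vec.subspace U"
  shows "card {P\<in>proj_points. P \<subseteq> U} * (CARD('a) - 1) = CARD('a) ^ vec.dim U - 1"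
proof -
  let ?X = "{P\<in>proj_points. P \<subseteq> U}"
  have fin: "finite ?X" by simp
  have U0: "0 \<in> U" using assms vec.subspace_0 by blast
  have "U - {0} = (\<Union>P\<in>?X. P - {0})"
  proof
    show "U - {0} \<subseteq> (\<Union>P\<in>?X. P - {0})"
    proof
      fix v assume v: "v \<in> U - {0}"
      have "vec.span {v} \<in> ?X" using v assms point_iff[of "vec.span {v}"]
        by (auto simp: proj_points_def vec.span_minimal)
      moreover have "v \<in> vec.span {v} - {0}" using v by (simp add: vec.span_base)
      ultimately show "v \<in> (\<Union>P\<in>?X. P - {0})" by blast
    qed
  qed auto
  hence "card (U - {0}) = card (\<Union>P\<in>?X. P - {0})" by simp
  also have "\<dots> = (\<Sum>P\<in>?X. card (P - {0}))"
  proof (rule card_UN_disjoint)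
    show "\<forall>i\<in>?X. \<forall>j\<in>?X. i \<noteq> j \<longrightarrow> (i - {0}) \<inter> (j - {0}) = {}"
    proof (intro ballI impI)
      fix P Q assume P: "P \<in> ?X" and Q: "Q \<in> ?X" and ne: "P \<noteq> Q"
      show "(P - {0}) \<inter> (Q - {0}) = {}"
      proof (rule ccontr)
        assume "(P - {0}) \<inter> (Q - {0}) \<noteq> {}"
        then obtain v where "v \<in> P" "v \<in> Q" "v \<noteq> 0" by blast
        hence "P = vec.span {v}" "Q = vec.span {v}" using P Q point_eq_span
          by (auto simp: proj_points_def)
        thus False using ne by simp
      qed
    qed
  qed auto
  also have "\<dots> = (\<Sum>P\<in>?X. CARD('a) - 1)"
  proof (rule sum.cong)
    fix P assume "P \<in> ?X"
    hence "proj_subspace 0 P" by (simp add: proj_points_def)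
    thus "card (P - {0}) = CARD('a) - 1" using card_point[of P] point_zero[of P] by (simp add: card_Diff_singleton)
  qed simp
  finally have "card (U - {0}) = card ?X * (CARD('a) - 1)" by simp
  moreover have "card (U - {0}) = CARD('a) ^ vec.dim U - 1" using U0 card_subspace[OF assms]
    by (simp add: card_Diff_singleton)
  ultimately show ?thesis by simp
qed

lemma transport:
  fixes f :: "'a::field ^ 'n::finite \<Rightarrow> 'a ^ 'n"
  assumes lf: "Vector_Spaces.linear (*s) (*s) f" and inj: "inj f"
    and U: "proj_subspace d U"
  shows "proj_subspace d (f ` U)"
proof -
  interpret f: Vector_Spaces.linear "(*s)" "(*s)" f by (rule lf)
  have "vec.subspace (f ` U)" using U f.subspace_image unfolding proj_subspace_def by blast
  moreover have "vec.dim (f ` U) = vec.dim U"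
    using vec.dim_image_eq[OF lf] inj by (simp add: inj_on_subset)
  ultimately show ?thesis using U unfolding proj_subspace_def by simp
qed

lemma pair_transitive:
  fixes P1 P2 P1' P2' :: "('a::field ^ 'n::finite) set"
  assumes "proj_subspace 0 P1" "proj_subspace 0 P2" "P1 \<noteq> P2"
    "proj_subspace 0 P1'" "proj_subspace 0 P2'" "P1' \<noteq> P2'"
  shows "\<exists>f. Vector_Spaces.linear (*s) (*s) f \<and> inj f \<and> f ` P1 = P1' \<and> f ` P2 = P2'"
proof -
  obtain u1 where u1: "u1 \<noteq> 0" "P1 = vec.span {u1}" using assms(1) point_iff by metis
  obtain u2 where u2: "u2 \<noteq> 0" "P2 = vec.span {u2}" using assms(2) point_iff by metis
  obtain v1 where v1: "v1 \<noteq> 0" "P1' = vec.span {v1}" using assms(4) point_iff by metis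
  obtain v2 where v2: "v2 \<noteq> 0" "P2' = vec.span {v2}" using assms(5) point_iff by metis
  have indep: "vec.independent {x, y}" if "x \<noteq> 0" "y \<noteq> 0" "proj_subspace 0 (vec.span {x})"
     "proj_subspace 0 (vec.span {y})" "vec.span {x} \<noteq> vec.span {y}" for x y :: "'a ^ 'n"
  proof -
    have "x \<notin> vec.span {y}"
    proof
      assume "x \<in> vec.span {y}"
      hence "vec.span {y} = vec.span {x}" using point_eq_span[OF that(4)] that(1) by blast
      thus False using that(5) by simp
    qed
    moreover have "vec.independent {y}" using that(2) by (simp add: vec.independent_insert)
    ultimately show ?thesis by (simp add: vec.independent_insertI)
  qed
  have i1: "vec.independent {u1, u2}" using indep u1 u2 assms by metis
  have i2: "vec.independent {v1, v2}" using indep v1 v2 assms by metis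
  have ne1: "u1 \<noteq> u2" using u1 u2 assms(3) by auto
  have ne2: "v1 \<noteq> v2" using v1 v2 assms(6) by auto
  define h where "h = (\<lambda>x. if x = u1 then v1 else v2)"
  have hB: "h ` {u1, u2} = {v1, v2}" using ne1 by (auto simp: h_def)
  have hinj: "inj_on h {u1, u2}" using ne1 ne2 by (auto simp: h_def inj_on_def)
  obtain g where g: "Vector_Spaces.linear (*s) (*s) g" "inj g" "\<forall>x\<in>{u1,u2}. g x = h x"
    using vec.linear_independent_extend_inj[OF i1 _ hinj] hB i2 by metis
  interpret g: Vector_Spaces.linear "(*s)" "(*s)" g by (rule g(1))
  have "g ` P1 = P1'" using u1 v1 g(3) g.span_image[of "{u1}"] by (simp add: h_def)
  moreover have "g ` P2 = P2'" using u2 v2 g(3) g.span_image[of "{u2}"] ne1 by (simp add: h_def)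
  ultimately show ?thesis using g by blast
qed

lemma b_const:
  fixes P1 P2 P1' P2' :: "('a::{field,finite} ^ 'n::finite) set"
  assumes "proj_subspace 0 P1" "proj_subspace 0 P2" "P1 \<noteq> P2"
    "proj_subspace 0 P1'" "proj_subspace 0 P2'" "P1' \<noteq> P2'"
  shows "card {U. proj_subspace d U \<and> P1 \<subseteq> U \<and> P2 \<subseteq> U}
       = card {U. proj_subspace d U \<and> P1' \<subseteq> U \<and> P2' \<subseteq> U}"
proof -
  have le: "card {U. proj_subspace d U \<and> A1 \<subseteq> U \<and> A2 \<subseteq> U}
       \<le> card {U. proj_subspace d U \<and> A1' \<subseteq> U \<and> A2' \<subseteq> U}"
    if a: "proj_subspace 0 A1" "proj_subspace 0 A2" "A1 \<noteq> A2"
    "proj_subspace 0 A1'" "proj_subspace 0 A2'" "A1' \<noteq> A2'" for A1 A2 A1' A2' :: "('a ^ 'n) set"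
  proof -
    obtain f where f: "Vector_Spaces.linear (*s) (*s) f" "inj f" "f ` A1 = A1'" "f ` A2 = A2'"
      using pair_transitive[OF a] by blast
    show ?thesis
    proof (rule card_inj_on_le[where f="\<lambda>U. f ` U"])
      show "inj_on ((`) f) {U. proj_subspace d U \<and> A1 \<subseteq> U \<and> A2 \<subseteq> U}"
        using f(2) by (simp add: inj_on_def inj_image_eq_iff)
      show "(`) f ` {U. proj_subspace d U \<and> A1 \<subseteq> U \<and> A2 \<subseteq> U}
            \<subseteq> {U. proj_subspace d U \<and> A1' \<subseteq> U \<and> A2' \<subseteq> U}"
        using f transport[OF f(1) f(2)] by blast
    qed simp
  qed
  show ?thesis using le[OF assms] le[OF assms(4-6) assms(1-3)] by simp
qed

lemma exists_subspace_containing: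
  fixes S :: "('a::field ^ 'n::finite) set"
  assumes "vec.independent S" "card S \<le> d + 1" "d + 1 \<le> CARD('n)"
  shows "\<exists>U. proj_subspace d U \<and> S \<subseteq> U"
proof -
  let ?B = "vec.extend_basis S"
  have fB: "finite ?B" using vec.independent_extend_basis[OF assms(1)] vec.finiteI_independent by blast
  have cB: "card ?B = CARD('n)"
  proof -
    have "card ?B = vec.dim (vec.span ?B)"
      using vec.dim_span_eq_card_independent[OF vec.independent_extend_basis[OF assms(1)]] by simp
    also have "\<dots> = vec.dim (UNIV :: ('a^'n) set)" using assms(1) by simp
    also have "\<dots> = CARD('n)" by (simp add: card_cart_basis)
    finally show ?thesis .
  qed
  have SB: "S \<subseteq> ?B" using vec.extend_basis_superset[OF assms(1)] .
  have fS: "finite S" using assms(1) vec.finiteI_independent by blast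
  have "d + 1 - card S \<le> card (?B - S)" using cB SB fB assms by (simp add: card_Diff_subset finite_subset)
  then obtain D where D: "D \<subseteq> ?B - S" "card D = d + 1 - card S" using obtain_subset_with_card_n by metis
  let ?C = "S \<union> D"
  have iC: "vec.independent ?C" using vec.independent_mono[OF vec.independent_extend_basis[OF assms(1)]] D SB by blast
  have cC: "card ?C = d + 1" using D fS assms(2) fB
    by (subst card_Un_disjoint) (auto intro: finite_subset)
  have "proj_subspace d (vec.span ?C)" unfolding proj_subspace_def
    using vec.dim_span_eq_card_independent[OF iC] cC by (simp add: vec.subspace_span)
  moreover have "S \<subseteq> vec.span ?C" using vec.span_superset by blast
  ultimately show ?thesis by blast
qed

lemma double_count:
  fixes X Y :: "('a::{field,finite} ^ 'n::finite) set set"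
  shows "(\<Sum>U\<in>{U. proj_subspace d U}. \<Sum>P\<in>meet X U. card (meet Y U - {P}))
       = (\<Sum>P\<in>X. \<Sum>Q\<in>Y-{P}. card {U. proj_subspace d U \<and> P \<subseteq> U \<and> Q \<subseteq> U})"
proof -
  let ?SS = "{U. proj_subspace d U}"
  have fX: "finite X" and fY: "finite Y" by simp_all
  have "(\<Sum>U\<in>?SS. \<Sum>P\<in>meet X U. card (meet Y U - {P}))
      = (\<Sum>U\<in>?SS. \<Sum>P\<in>X. \<Sum>Q\<in>Y-{P}. if P \<subseteq> U \<and> Q \<subseteq> U then 1 else 0)"
  proof (rule sum.cong[OF refl])
    fix U
    have "(\<Sum>P\<in>meet X U. card (meet Y U - {P})) = (\<Sum>P\<in>X. if P \<subseteq> U then card (meet Y U - {P}) else 0)"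
      unfolding meet_def by (simp add: sum.If_cases fX Int_def)
    also have "\<dots> = (\<Sum>P\<in>X. \<Sum>Q\<in>Y-{P}. if P \<subseteq> U \<and> Q \<subseteq> U then 1 else 0)"
    proof (rule sum.cong[OF refl])
      fix P
      have "card (meet Y U - {P}) = (\<Sum>Q\<in>Y-{P}. if Q \<subseteq> U then 1 else 0)"
        unfolding meet_def by (simp add: sum.If_cases fY Int_def set_diff_eq, rule arg_cong[where f=card], blast)
      thus "(if P \<subseteq> U then card (meet Y U - {P}) else 0) = (\<Sum>Q\<in>Y-{P}. if P \<subseteq> U \<and> Q \<subseteq> U then 1 else 0)"
        by simp
    qed
    finally show "(\<Sum>P\<in>meet X U. card (meet Y U - {P})) = (\<Sum>P\<in>X. \<Sum>Q\<in>Y-{P}. if P \<subseteq> U \<and> Q \<subseteq> U then 1 else 0)" .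
  qed
  also have "\<dots> = (\<Sum>P\<in>X. \<Sum>U\<in>?SS. \<Sum>Q\<in>Y-{P}. if P \<subseteq> U \<and> Q \<subseteq> U then 1 else 0)"
    by (rule sum.swap)
  also have "\<dots> = (\<Sum>P\<in>X. \<Sum>Q\<in>Y-{P}. \<Sum>U\<in>?SS. if P \<subseteq> U \<and> Q \<subseteq> U then 1 else 0)"
    by (rule sum.cong[OF refl], rule sum.swap)
  also have "\<dots> = (\<Sum>P\<in>X. \<Sum>Q\<in>Y-{P}. card {U. proj_subspace d U \<and> P \<subseteq> U \<and> Q \<subseteq> U})"
    by (simp add: sum.If_cases Int_def)
  finally show ?thesis .
qed

lemma quad_convex:
  fixes a b x al be ga :: real
  assumes "al \<ge> 0" "a \<le> x" "x < b"
    "al*a^2 + be*a + ga < 0" "al*b^2 + be*b + ga \<le> 0"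
  shows "al*x^2 + be*x + ga < 0"
proof -
  have id: "(b-a)*(al*x^2 + be*x + ga) = (b-x)*(al*a^2 + be*a + ga) + (x-a)*(al*b^2 + be*b + ga)
       - al*((b-a)*((x-a)*(b-x)))" by algebra
  have "(b-x)*(al*a^2 + be*a + ga) < 0" using assms by (simp add: mult_pos_neg)
  moreover have "(x-a)*(al*b^2 + be*b + ga) \<le> 0" using assms by (simp add: mult_nonneg_nonpos)
  moreover have "al*((b-a)*((x-a)*(b-x))) \<ge> 0" using assms by simp
  ultimately have "(b-a)*(al*x^2 + be*x + ga) < 0" using id by linarith
  moreover have "b - a > 0" using assms by simp
  ultimately show ?thesis by (simp add: mult_less_0_iff)
qed

lemma poly_fact:
  fixes p w :: real
  assumes "p \<ge> 7" "w \<ge> p^2"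
  shows "9*(p-1)^2*(w-1) \<le> 2*p*(p+1)*((p-3)*w - 3*(p-1))"
proof -
  define D where "D = 2*p*(p+1)*(p-3) - 9*(p-1)^2"
  have "D - p^2 = 2*p^2*(p-7) + (12*p - 9)" unfolding D_def by (simp add: algebra_simps power2_eq_square)
  moreover have "2*p^2*(p-7) \<ge> 0" using assms by simp
  ultimately have D: "D \<ge> p^2" using assms by linarith
  have w0: "w \<ge> 0" using assms(2) by (smt (verit) zero_le_power2)
  have "w*D \<ge> p^2*p^2" using D assms w0 by (intro mult_mono) auto
  moreover have "p^2*p^2 - (6*p*(p^2-1) - 9*(p-1)^2) = p^3*(p-6) + 6*p + 9*(p-1)^2"
    by (simp add: algebra_simps power2_eq_square power3_eq_cube)
  moreover have "p^3*(p-6) \<ge> 0" using assms by simp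
  moreover have "2*p*(p+1)*((p-3)*w - 3*(p-1)) - 9*(p-1)^2*(w-1) = w*D - (6*p*(p^2-1) - 9*(p-1)^2)"
    unfolding D_def by (simp add: algebra_simps power2_eq_square)
  moreover have "9*(p-1)^2 \<ge> 0" by simp
  ultimately show ?thesis using assms by linarith
qed

lemma final_ineq:
  fixes x s T w Q p q :: real
  assumes p7: "p \<ge> 7" and pq: "p \<le> q" and Q1: "Q \<ge> 1" and wq: "w \<ge> q^2"
    and sdef: "s*(q-1) = w-1" and Tdef: "T*(q-1) = Q*w-1"
    and g: "x*(x-1) * s * (s-1) - (p+1)*(T-1)*(x * s - T) \<ge> 0" and x2: "x < 2*Q"
  shows "x < 3*(Q - Q/p)/2"
proof (rule ccontr)
  assume "\<not> x < 3*(Q - Q/p)/2"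
  hence xx: "x \<ge> 3*(Q - Q/p)/2" by simp
  define al where "al = (w-1)*(w-q)"
  define be where "be = -(w-1)*(w-q) - (p+1)*(Q*w-q)*(w-1)"
  define ga where "ga = (p+1)*(Q*w-q)*(Q*w-1)"
  define h where "h z = al*z^2 + be*z + ga" for z
  have hform: "h z = z*(z-1)*(w-1)*(w-q) - (p+1)*(Q*w-q)*(z*(w-1) - (Q*w-1))" for z
    unfolding h_def al_def be_def ga_def by (simp add: algebra_simps power2_eq_square)
  have q7: "q \<ge> 7" using p7 pq by simp
  have w49: "w \<ge> 49" using wq q7 power_mono[of 7 q 2] by simp
  have "q^2 \<ge> 7*q" using q7 by (simp add: power2_eq_square)
  hence wq': "w > q" using wq q7 by simp
  have hx: "h x \<ge> 0"
  proof -
    have "h x = (q-1)^2 * (x*(x-1) * s * (s-1) - (p+1)*(T-1)*(x * s - T))"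
      unfolding hform using sdef Tdef by algebra
    thus ?thesis using g by simp
  qed
  have al0: "al \<ge> 0" unfolding al_def using w49 wq' by simp
  have h2: "h (2*Q) \<le> 0"
  proof -
    have A: "Q*(w-q) \<le> Q*w-q" using Q1 q7 by (simp add: algebra_simps)
    have B: "Q*(w-2) \<le> Q*w - 2*Q + 1" by (simp add: algebra_simps)
    have A0: "0 \<le> Q*(w-q)" using Q1 wq' by simp
    have B0: "0 \<le> Q*(w-2)" using Q1 w49 by simp
    have AB: "(Q*(w-q))*(Q*(w-2)) \<le> (Q*w-q)*(Q*w - 2*Q + 1)"
      using A B A0 B0 by (intro mult_mono) auto
    have AB8: "8*((Q*(w-q))*(Q*(w-2))) \<le> (p+1)*((Q*w-q)*(Q*w - 2*Q + 1))"
      using AB p7 A0 B0 by (rule_tac mult_mono) auto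
    have "8*((Q*(w-q))*(Q*(w-2))) - 2*Q*(2*Q-1)*(w-1)*(w-q) = (Q*(w-q))*(4*Q*(w-3) + 2*(w-1))"
      by (simp add: algebra_simps)
    moreover have "(Q*(w-q))*(4*Q*(w-3) + 2*(w-1)) \<ge> 0" using A0 Q1 w49 by simp
    ultimately have "2*Q*(2*Q-1)*(w-1)*(w-q) \<le> (p+1)*((Q*w-q)*(Q*w - 2*Q + 1))" using AB8 by linarith
    moreover have "h (2*Q) = 2*Q*(2*Q-1)*(w-1)*(w-q) - (p+1)*((Q*w-q)*(Q*w - 2*Q + 1))"
      unfolding hform by (simp add: algebra_simps)
    ultimately show ?thesis by simp
  qed
  define c where "c = 3*(p-1)/(2*p)"
  define x0 where "x0 = c*Q"
  have x0eq: "x0 = 3*(Q - Q/p)/2" unfolding x0_def c_def using p7 by (simp add: field_simps)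
  have c1: "c - 1 = (p-3)/(2*p)" unfolding c_def using p7 by (simp add: field_simps)
  have cpos: "c > 0" unfolding c_def using p7 by simp
  have c2: "c < 2" unfolding c_def using p7 by (simp add: field_simps)
  define F where "F = (c-1)*w - c"
  have key: "c^2*(w-1) \<le> (p+1)*F"
  proof -
    have "p^2 \<le> q^2" using pq p7 power_mono[of p q 2] by simp
    hence pw: "w \<ge> p^2" using wq by simp
    have i: "9*(p-1)^2*(w-1) \<le> 2*p*(p+1)*((p-3)*w - 3*(p-1))" using poly_fact[OF p7 pw] .
    have e1: "c^2*(w-1) = 9*(p-1)^2*(w-1) / (4*p^2)" unfolding c_def using p7
      by (simp add: field_simps power2_eq_square)
    have e2: "(p+1)*F = 2*p*(p+1)*((p-3)*w - 3*(p-1)) / (4*p^2)" unfolding F_def c_def using p7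
      by (simp add: field_simps power2_eq_square)
    have "9*(p-1)^2*(w-1) / (4*p^2) \<le> 2*p*(p+1)*((p-3)*w - 3*(p-1)) / (4*p^2)"
      by (rule divide_right_mono[OF i]) simp
    thus ?thesis unfolding e1 e2 .
  qed
  have Fpos: "F > 0"
  proof -
    have cc: "c - 1 \<ge> 2/7" unfolding c_def using p7 by (simp add: field_simps)
    have "(c-1)*w \<ge> (2/7)*49" using cc w49
      by (intro mult_mono) auto
    thus ?thesis unfolding F_def using c2 by simp
  qed
  have h0: "h x0 < 0"
  proof -
    have E: "x0*(w-1) - (Q*w-1) = Q*F + 1" unfolding x0_def F_def by (simp add: algebra_simps)
    have A: "Q*(w-q) \<le> Q*w-q" using Q1 q7 by (simp add: algebra_simps)
    have A0: "0 \<le> Q*(w-q)" using Q1 wq' by simp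
    have QF: "0 \<le> Q*F" using Q1 Fpos by simp
    have R: "(Q*(w-q))*(Q*F) \<le> (Q*w-q)*(x0*(w-1) - (Q*w-1))"
      using A A0 QF unfolding E by (intro mult_mono) auto
    have R2: "(p+1)*((Q*(w-q))*(Q*F)) \<le> (p+1)*((Q*w-q)*(x0*(w-1) - (Q*w-1)))"
      using R p7 by simp
    have wpos: "(w-1)*(w-q) > 0" using w49 wq' q7 by (intro mult_pos_pos) auto
    have x0pos: "x0 > 0" unfolding x0_def using cpos Q1 by simp
    have L: "x0*(x0-1)*(w-1)*(w-q) < x0^2*((w-1)*(w-q))"
    proof -
      have "x0*(x0-1) < x0^2" using x0pos by (simp add: power2_eq_square algebra_simps)
      thus ?thesis using wpos by (simp add: mult.assoc) (metis mult_strict_right_mono mult.assoc)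
    qed
    have "x0^2*((w-1)*(w-q)) = Q^2*(w-q)*(c^2*(w-1))" unfolding x0_def by (simp add: algebra_simps power2_eq_square)
    also have "\<dots> \<le> Q^2*(w-q)*((p+1)*F)" using key Q1 wq' by (intro mult_left_mono) auto
    also have "\<dots> = (p+1)*((Q*(w-q))*(Q*F))" by (simp add: algebra_simps power2_eq_square)
    finally have "x0*(x0-1)*(w-1)*(w-q) < (p+1)*((Q*w-q)*(x0*(w-1) - (Q*w-1)))" using L R2 by linarith
    thus ?thesis unfolding hform by (simp add: algebra_simps)
  qed
  have "x0 \<le> x" using xx x0eq by simp
  have "h x < 0" unfolding h_def
    using quad_convex[OF al0 \<open>x0 \<le> x\<close> x2] h0 h2 unfolding h_def by blast
  thus False using hx by simp
qed

lemma points_indep: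
  fixes P Q :: "('a::field ^ 'n::finite) set"
  assumes "proj_subspace 0 P" "proj_subspace 0 Q" "P \<noteq> Q"
  obtains u v where "P = vec.span {u}" "Q = vec.span {v}" "vec.independent {u, v}" "u \<noteq> v"
proof -
  obtain u where u: "u \<noteq> 0" "P = vec.span {u}" using assms(1) point_iff by metis
  obtain v where v: "v \<noteq> 0" "Q = vec.span {v}" using assms(2) point_iff by metis
  have "u \<notin> vec.span {v}"
  proof
    assume "u \<in> vec.span {v}"
    hence "Q = vec.span {u}" using point_eq_span[OF assms(2)] u(1) v(2) by blast
    thus False using assms(3) u(2) by simp
  qed
  moreover have "vec.independent {v}" using v(1) by (simp add: vec.independent_insert)
  ultimately have "vec.independent {u, v}" by (simp add: vec.independent_insertI)
  moreover have "u \<noteq> v" using u v assms(3) by auto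
  ultimately show ?thesis using that u v by blast
qed

lemma sum_pairs_const:
  fixes X Y :: "'b set" and c :: "'b \<Rightarrow> 'b \<Rightarrow> nat"
  assumes "X \<subseteq> Y" "finite Y" "\<And>P Q. P \<in> Y \<Longrightarrow> Q \<in> Y \<Longrightarrow> P \<noteq> Q \<Longrightarrow> c P Q = b"
  shows "(\<Sum>P\<in>X. \<Sum>Q\<in>Y-{P}. c P Q) = card X * (card Y - 1) * b"
proof -
  have "(\<Sum>P\<in>X. \<Sum>Q\<in>Y-{P}. c P Q) = (\<Sum>P\<in>X. (card Y - 1) * b)"
  proof (rule sum.cong[OF refl])
    fix P assume P: "P \<in> X"
    hence "(\<Sum>Q\<in>Y-{P}. c P Q) = (\<Sum>Q\<in>Y-{P}. b)" using assms by (intro sum.cong) auto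
    also have "\<dots> = (card Y - 1) * b" using P assms by (simp add: card_Diff_singleton subsetD)
    finally show "(\<Sum>Q\<in>Y-{P}. c P Q) = (card Y - 1) * b" .
  qed
  thus ?thesis by simp
qed

lemma nonneg_term:
  fixes i p :: nat
  assumes "i \<ge> 1" "i mod p = 1 mod p" "p > 1"
  shows "(real i - 1) * (real i - 1 - real p) \<ge> 0"
proof -
  have "i mod p = 1" using assms by simp
  hence "i = p * (i div p) + 1" by (metis div_mult_mod_eq mult.commute)
  then obtain j where j: "i = p * j + 1" by blast
  have "(real i - 1) * (real i - 1 - real p) = real p^2 * (real j * (real j - 1))"
    using j by (simp add: algebra_simps power2_eq_square)
  moreover have "real j * (real j - 1) \<ge> 0" by (cases "j = 0") auto
  ultimately show ?thesis by simp
qed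

theorem mainTheorem1:
  fixes B :: "('a::{field,finite} ^ 'n::finite) set set"
    and n k p h q :: nat
  assumes "CARD('n) = n + 1"
    and "n \<ge> 2" and "1 \<le> k" and "k \<le> n - 1"
    and "prime p" and "p > 5" and "h \<ge> 1" and "q = p ^ h"
    and "CARD('a) = q"
    and "minimal_blocking_set n k B"
    and "\<forall>U. proj_subspace (n - k) U \<longrightarrow> card (meet B U) mod p = 1 mod p"
    and "theta q k < card B" and "card B < 2 * q ^ k"
  shows "real (card B) < 3 * (real q ^ k - real q ^ k / real p) / 2"
proof -
  note cardn = assms(1)
  define m where "m = n - k"
  have m1: "m \<ge> 1" and nkm: "n = k + m" using assms(2-4) unfolding m_def by auto
  have "odd p" using assms(5,6) prime_odd_nat by auto
  hence p7: "p \<ge> 7" using assms(6) by presburger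
  have pq: "p \<le> q" using assms(7,8) p7 by (simp add: self_le_power)
  have q7: "q \<ge> 7" using pq p7 by simp
  have Bpts: "B \<subseteq> proj_points" and blk: "\<And>U. proj_subspace m U \<Longrightarrow> meet B U \<noteq> {}"
    using assms(10) unfolding minimal_blocking_set_def blocking_set_def m_def by auto
  have modp: "\<And>U. proj_subspace m U \<Longrightarrow> card (meet B U) mod p = 1 mod p"
    using assms(11) unfolding m_def by auto
  define SS where "SS = {U::('a^'n) set. proj_subspace m U}"
  define s where "s = (q^(m+1) - 1) div (q - 1)"
  define T where "T = card (proj_points :: ('a^'n) set set)"
  define x where "x = card B"
  have sU: "card (meet proj_points U) = s" if "U \<in> SS" for U
  proof -
    have "vec.subspace U" "vec.dim U = m + 1" using that unfolding SS_def proj_subspace_def by auto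
    hence "card (meet proj_points U) * (q - 1) = q^(m+1) - 1"
      using count_points[of U] assms(9) unfolding meet_def by simp
    moreover have "q - 1 \<noteq> 0" using q7 by simp
    ultimately show ?thesis unfolding s_def by (metis nonzero_mult_div_cancel_right)
  qed
  have s_eq: "s * (q - 1) = q^(m+1) - 1"
  proof -
    have "\<exists>U::('a^'n) set. proj_subspace m U"
      using exists_subspace_containing[of "{}::('a^'n) set" m] cardn nkm by (simp add: vec.independent_empty)
    then obtain U :: "('a^'n) set" where "proj_subspace m U" by blast
    hence "card (meet proj_points U) * (q - 1) = q^(m+1) - 1"
      using count_points[of U] assms(9) unfolding meet_def proj_subspace_def by simp
    thus ?thesis using sU[of U] \<open>proj_subspace m U\<close> unfolding SS_def by simp
  qed
  have T_eq: "T * (q - 1) = q^(n+1) - 1"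
  proof -
    have "vec.dim (UNIV :: ('a^'n) set) = n + 1" using cardn by (simp add: card_cart_basis)
    moreover have "{P\<in>proj_points. P \<subseteq> (UNIV :: ('a^'n) set)} = proj_points" by auto
    ultimately show ?thesis using count_points[of "UNIV :: ('a^'n) set"] assms(9) unfolding T_def
      by (simp add: vec.subspace_UNIV)
  qed
  have s2: "s \<ge> 2"
  proof -
    have "q^(m+1) \<ge> q^2" using m1 q7 by (intro power_increasing) auto
    hence "s * (q - 1) \<ge> q^2 - 1" using s_eq by simp
    moreover have "q^2 - 1 = (q+1)*(q-1)" by (simp add: power2_eq_square algebra_simps)
    ultimately have "s * (q-1) \<ge> (q+1)*(q-1)" by simp
    moreover have "0 < q - 1" using q7 by simp
    ultimately have "s \<ge> q + 1" by (metis mult_le_cancel2)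
    thus ?thesis using q7 by simp
  qed
  have T2: "T \<ge> 2"
  proof -
    have "q^(n+1) \<ge> q^2" using assms(2) q7 by (intro power_increasing) auto
    hence "T * (q - 1) \<ge> q^2 - 1" using T_eq by simp
    moreover have "q^2 - 1 = (q+1)*(q-1)" by (simp add: power2_eq_square algebra_simps)
    ultimately have "T * (q-1) \<ge> (q+1)*(q-1)" by simp
    moreover have "0 < q - 1" using q7 by simp
    ultimately have "T \<ge> q + 1" by (metis mult_le_cancel2)
    thus ?thesis using q7 by simp
  qed
  obtain P0 Q0 where P0: "P0 \<in> proj_points" and Q0: "Q0 \<in> (proj_points :: ('a^'n) set set)" and PQ: "P0 \<noteq> Q0"
  proof -
    have "\<not> card (proj_points :: ('a^'n) set set) \<le> Suc 0" using T2 unfolding T_def by simp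
    then show ?thesis using that card_le_Suc0_iff_eq[of "proj_points :: ('a^'n) set set"] by auto
  qed
  define b where "b = card {U::('a^'n) set. proj_subspace m U \<and> P0 \<subseteq> U \<and> Q0 \<subseteq> U}"
  have bc: "card {U::('a^'n) set. proj_subspace m U \<and> P \<subseteq> U \<and> Q \<subseteq> U} = b"
    if "P \<in> proj_points" "Q \<in> proj_points" "P \<noteq> Q" for P Q
    unfolding b_def using b_const[of P Q P0 Q0 m] that P0 Q0 PQ by (simp add: proj_points_def)
  have bpos: "b > 0"
  proof -
    have pP0: "proj_subspace 0 P0" and pQ0: "proj_subspace 0 Q0" using P0 Q0 by (auto simp: proj_points_def)
    obtain u v :: "'a^'n" where uv: "P0 = vec.span {u}" "Q0 = vec.span {v}" "vec.independent {u, v}" "u \<noteq> v"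
      using points_indep[OF pP0 pQ0 PQ] by blast
    have c1: "card {u, v} \<le> m + 1" using uv(4) m1 by simp
    have c2: "m + 1 \<le> CARD('n)" using cardn nkm by simp
    obtain U :: "('a^'n) set" where U: "proj_subspace m U" "{u, v} \<subseteq> U"
      using exists_subspace_containing[OF uv(3) c1 c2] by blast
    have "vec.subspace U" using U(1) unfolding proj_subspace_def by simp
    hence "P0 \<subseteq> U" "Q0 \<subseteq> U" using U(2) uv(1,2) vec.span_minimal[of "{u}" U] vec.span_minimal[of "{v}" U] by auto
    hence "U \<in> {U::('a^'n) set. proj_subspace m U \<and> P0 \<subseteq> U \<and> Q0 \<subseteq> U}" using U(1) by simp
    hence "{U::('a^'n) set. proj_subspace m U \<and> P0 \<subseteq> U \<and> Q0 \<subseteq> U} \<noteq> {}" by blast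
    thus ?thesis unfolding b_def by (simp add: card_gt_0_iff)
  qed
  define i where "i U = card (meet B U)" for U
  define N where "N = card SS"
  have E1: "N * (s * (s - 1)) = T * (T - 1) * b"
  proof -
    have "(\<Sum>U\<in>SS. \<Sum>P\<in>meet proj_points U. card (meet proj_points U - {P})) = N * (s * (s - 1))"
      unfolding N_def using sU by (simp add: card_Diff_singleton)
    moreover have "(\<Sum>U\<in>SS. \<Sum>P\<in>meet proj_points U. card (meet proj_points U - {P}))
        = T * (T - 1) * b"
      unfolding SS_def double_count T_def using bc by (intro sum_pairs_const) auto
    ultimately show ?thesis by simp
  qed
  have E2: "(\<Sum>U\<in>SS. i U) * (s - 1) = x * (T - 1) * b"
  proof -
    have "(\<Sum>U\<in>SS. \<Sum>P\<in>meet B U. card (meet proj_points U - {P})) = (\<Sum>U\<in>SS. i U * (s - 1))"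
    proof (rule sum.cong[OF refl])
      fix U assume U: "U \<in> SS"
      have "(\<Sum>P\<in>meet B U. card (meet proj_points U - {P})) = (\<Sum>P\<in>meet B U. s - 1)"
      proof (rule sum.cong[OF refl])
        fix P assume "P \<in> meet B U"
        hence "P \<in> meet proj_points U" using Bpts unfolding meet_def by auto
        thus "card (meet proj_points U - {P}) = s - 1" using sU[OF U] by (simp add: card_Diff_singleton)
      qed
      thus "(\<Sum>P\<in>meet B U. card (meet proj_points U - {P})) = i U * (s - 1)" unfolding i_def by simp
    qed
    moreover have "(\<Sum>U\<in>SS. \<Sum>P\<in>meet B U. card (meet proj_points U - {P})) = x * (T - 1) * b"
      unfolding SS_def double_count T_def x_def using bc Bpts by (intro sum_pairs_const) auto
    ultimately show ?thesis by (simp add: sum_distrib_right)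
  qed
  have E3: "(\<Sum>U\<in>SS. i U * (i U - 1)) = x * (x - 1) * b"
  proof -
    have "(\<Sum>U\<in>SS. \<Sum>P\<in>meet B U. card (meet B U - {P})) = (\<Sum>U\<in>SS. i U * (i U - 1))"
    proof (rule sum.cong[OF refl])
      fix U assume U: "U \<in> SS"
      have "(\<Sum>P\<in>meet B U. card (meet B U - {P})) = (\<Sum>P\<in>meet B U. i U - 1)"
        unfolding i_def by (intro sum.cong) (auto simp: card_Diff_singleton)
      thus "(\<Sum>P\<in>meet B U. card (meet B U - {P})) = i U * (i U - 1)" unfolding i_def by simp
    qed
    moreover have "(\<Sum>U\<in>SS. \<Sum>P\<in>meet B U. card (meet B U - {P})) = x * (x - 1) * b"
      unfolding SS_def double_count x_def using bc Bpts by (intro sum_pairs_const) auto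
    ultimately show ?thesis by simp
  qed
  have i1: "i U \<ge> 1" if "U \<in> SS" for U
  proof -
    have "meet B U \<noteq> {}" using blk that unfolding SS_def by simp
    thus ?thesis unfolding i_def by (simp add: Suc_le_eq card_gt_0_iff)
  qed
  have V: "0 \<le> (\<Sum>U\<in>SS. (real (i U) - 1) * (real (i U) - 1 - real p))"
    using nonneg_term i1 modp p7 unfolding SS_def i_def by (intro sum_nonneg) auto
  have Vexp: "(\<Sum>U\<in>SS. (real (i U) - 1) * (real (i U) - 1 - real p))
      = real (\<Sum>U\<in>SS. i U * (i U - 1)) - (real p + 1) * real (\<Sum>U\<in>SS. i U) + (real p + 1) * real N"
  proof -
    have "(\<Sum>U\<in>SS. (real (i U) - 1) * (real (i U) - 1 - real p))
        = (\<Sum>U\<in>SS. real (i U * (i U - 1)) - (real p + 1) * real (i U) + (real p + 1))"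
    proof (rule sum.cong[OF refl])
      fix U assume "U \<in> SS"
      hence "i U \<ge> 1" by (rule i1)
      thus "(real (i U) - 1) * (real (i U) - 1 - real p) = real (i U * (i U - 1)) - (real p + 1) * real (i U) + (real p + 1)"
        by (simp add: of_nat_diff algebra_simps)
    qed
    also have "\<dots> = real (\<Sum>U\<in>SS. i U * (i U - 1)) - (real p + 1) * real (\<Sum>U\<in>SS. i U) + (real p + 1) * real N"
      unfolding N_def by (simp add: sum.distrib sum_subtractf sum_distrib_left)
    finally show ?thesis .
  qed
  define rs where "rs = real s"
  define rT where "rT = real T"
  define rx where "rx = real x"
  define rb where "rb = real b"
  have R1: "real N * (rs * (rs - 1)) = rT * (rT - 1) * rb"
    using arg_cong[OF E1, of real] s2 T2 unfolding rs_def rT_def rb_def by (simp add: of_nat_diff)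
  have R2: "real (\<Sum>U\<in>SS. i U) * (rs - 1) = rx * (rT - 1) * rb"
    using arg_cong[OF E2, of real] s2 T2 unfolding rs_def rT_def rb_def rx_def by (simp add: of_nat_diff)
  have x1: "x \<ge> 1"
  proof -
    have "\<exists>U::('a^'n) set. proj_subspace m U"
      using exists_subspace_containing[of "{}::('a^'n) set" m] cardn nkm by (simp add: vec.independent_empty)
    then obtain U :: "('a^'n) set" where "proj_subspace m U" by blast
    hence "meet B U \<noteq> {}" by (rule blk)
    hence "B \<noteq> {}" unfolding meet_def by auto
    thus ?thesis unfolding x_def by (simp add: Suc_le_eq card_gt_0_iff)
  qed
  have R3: "real (\<Sum>U\<in>SS. i U * (i U - 1)) = rx * (rx - 1) * rb"
    using arg_cong[OF E3, of real] x1 unfolding rx_def rb_def by (simp add: of_nat_diff)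
  have G: "0 \<le> rb * (rx*(rx-1)*rs*(rs-1) - (real p+1)*(rT-1)*(rx*rs - rT))"
  proof -
    have "0 \<le> rs * (rs - 1) * (\<Sum>U\<in>SS. (real (i U) - 1) * (real (i U) - 1 - real p))"
      using V s2 unfolding rs_def by simp
    also have "\<dots> = rb * (rx*(rx-1)*rs*(rs-1) - (real p+1)*(rT-1)*(rx*rs - rT))"
      unfolding Vexp using R1 R2 R3 by algebra
    finally show ?thesis .
  qed
  have g: "rx*(rx-1)*rs*(rs-1) - (real p+1)*(rT-1)*(rx*rs - rT) \<ge> 0"
    using G bpos unfolding rb_def by (simp add: zero_le_mult_iff)
  have sR: "rs * (real q - 1) = real q ^ (m+1) - 1"
    using arg_cong[OF s_eq, of real] q7 unfolding rs_def by (simp add: of_nat_diff)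
  have TR: "rT * (real q - 1) = real q ^ k * real q ^ (m+1) - 1"
    using arg_cong[OF T_eq, of real] q7 unfolding rT_def nkm
    by (simp add: of_nat_diff power_add)
  have wq: "real q ^ (m+1) \<ge> real q ^ 2" using m1 q7 by (intro power_increasing) auto
  have Q1: "real q ^ k \<ge> 1" using q7 by simp
  have "rx < 2 * real q ^ k" using assms(13) unfolding rx_def x_def by (simp flip: of_nat_power)
  from final_ineq[OF _ _ Q1 wq sR TR g this] p7 pq
  show ?thesis unfolding rx_def x_def by simp
qed

end
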